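(* Let $L\ge1$, let $\gamma,\theta,\zeta,\mu_1,\dots,\mu_L$ be generic complex parameters, and consider the functions $M_\nu:\mathbb{C}^{L+1}\to\mathbb{C}$, $0\le\nu\le L$, $(\lambda_0,\boldsymbol\lambda)\mapsto M_\nu(\lambda_0;\boldsymbol\lambda)$ with $\boldsymbol\lambda=(\lambda_1,\dots,\lambda_L)$, defined in the context. Then: (1) $M_0(\lambda_0;\boldsymbol\lambda)$ is symmetric in $\lambda_1,\dots,\lambda_L$ and invariant under $\lambda_j\mapsto-\lambda_j-\gamma$ for each $1\le j\le L$; (2) for each $1\le i\le L$, $M_i(\lambda_0;\boldsymbol\lambda)$ is symmetric in the variables $\lambda_j$, $j\in\{1,\dots,L\}\setminus\{i\}$, and invariant under $\lambda_j\mapsto-\lambda_j-\gamma$ for each $j\in\{1,\dots,L\}\setminus\{i\}$; (3) for $1\le i,j\le L$, $M_i(\lambda_0;\boldsymbol\lambda)|_{\lambda_i\leftrightarrow\lambda_j}=M_j(\lambda_0;\boldsymbol\lambda)$, and \[ M_i(\lambda_0;\boldsymbol\lambda)\big|_{\lambda_i\mapsto-\lambda_i-\gamma}=-\frac{[2\lambda_i+2\gamma,\,\theta+\zeta+\lambda_i]}{[2\lambda_i,\,\theta+\zeta-\lambda_i-\gamma]}\,M_i(\lambda_0;\boldsymbol\lambda). \]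
   Context: Fix $\tau\in\mathbb{C}$ with $\operatorname{Im}\tau>0$, let $f(\lambda)=\sum_{n\ge0}(-1)^n e^{\mathrm{i}n(n+1)\pi\tau}\sinh((2n+1)\lambda)$, and write $[x]:=f(x)$, $[x_1,\dots,x_k]:=f(x_1)\cdots f(x_k)$. Define $\Lambda_{\mathcal A}(\lambda)=[\zeta+\lambda]\frac{[\theta+\zeta-\lambda]}{[\theta+\zeta+\lambda]}\prod_{j=1}^L[\lambda-\mu_j+\gamma,\lambda+\mu_j+\gamma]$, $\Lambda_{\tilde{\mathcal D}}(\lambda)=[\zeta-\lambda-\gamma]\frac{[2\lambda,\theta+\zeta+\lambda+\gamma,\theta-L\gamma]}{[2\lambda+\gamma,\theta+\zeta+\lambda,\theta-(L-1)\gamma]}\prod_{j=1}^L[\lambda-\mu_j,\lambda+\mu_j]$, $\bar\Lambda_{\mathcal A}(\lambda)=[\zeta-\lambda]\frac{[\gamma,\theta+(L-1)\gamma-2\lambda]}{[2\lambda+\gamma,\theta+(L-1)\gamma]}\prod_{j=1}^L[\lambda-\mu_j+\gamma,\lambda+\mu_j+\gamma]+[\zeta+\lambda+\gamma]\frac{[2\lambda,\theta+\zeta-\lambda-\gamma,\theta+L\gamma]}{[2\lambda+\gamma,\theta+\zeta+\lambda,\theta+(L-1)\gamma]}\prod_{j=1}^L[\lambda-\mu_j,\lambda+\mu_j]$. Then $M_0(\lambda_0;\boldsymbol\lambda)=\bar\Lambda_{\mathcal A}(\lambda_0)-\Lambda_{\mathcal A}(\lambda_0)\prod_{j=1}^L\frac{[\lambda_j-\lambda_0+\gamma,\lambda_j+\lambda_0]}{[\lambda_j-\lambda_0,\lambda_j+\lambda_0+\gamma]}$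 and, for $1\le i\le L$, $M_i(\lambda_0;\boldsymbol\lambda)=\frac{[2\lambda_i,\gamma,\theta+(L-1)\gamma+\lambda_i-\lambda_0]}{[2\lambda_i+\gamma,\lambda_i-\lambda_0,\theta+(L-1)\gamma]}\Lambda_{\mathcal A}(\lambda_i)\prod_{j\ne i}\frac{[\lambda_j-\lambda_i+\gamma,\lambda_j+\lambda_i]}{[\lambda_j-\lambda_i,\lambda_j+\lambda_i+\gamma]}+\frac{[\gamma,\theta+(L-2)\gamma-\lambda_i-\lambda_0,\theta-(L-1)\gamma]}{[\lambda_i+\lambda_0+\gamma,\theta+(L-1)\gamma,\theta-L\gamma]}\Lambda_{\tilde{\mathcal D}}(\lambda_i)\prod_{j\ne i}\frac{[\lambda_i-\lambda_j+\gamma,\lambda_i+\lambda_j+2\gamma]}{[\lambda_i-\lambda_j,\lambda_i+\lambda_j+\gamma]}$, products over $j\in\{1,\dots,L\}$. *)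

theory Defs
  imports "HOL-Analysis.Analysis" "HOL-Combinatorics.Permutations"
begin

text \<open>The odd theta-type function [x] = f(x) with nome parameter tau (Im tau > 0).\<close>
definition thf :: "complex \<Rightarrow> complex \<Rightarrow> complex" where
  "thf tau x = (\<Sum>n. (-1)^n * exp (\<i> * of_nat (n * (n + 1)) * of_real pi * tau)
                      * sinh (of_nat (2 * n + 1) * x))"

definition LamA :: "complex \<Rightarrow> complex \<Rightarrow> complex \<Rightarrow> complex \<Rightarrow> nat \<Rightarrow> (nat \<Rightarrow> complex)
    \<Rightarrow> complex \<Rightarrow> complex" where
  "LamA tau g th z L mu x =
     thf tau (z + x) * thf tau (th + z - x) / thf tau (th + z + x)
     * (\<Prod>j\<in>{1..L}. thf tau (x - mu j + g) * thf tau (x + mu j + g))"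

definition LamD :: "complex \<Rightarrow> complex \<Rightarrow> complex \<Rightarrow> complex \<Rightarrow> nat \<Rightarrow> (nat \<Rightarrow> complex)
    \<Rightarrow> complex \<Rightarrow> complex" where
  "LamD tau g th z L mu x =
     thf tau (z - x - g)
     * (thf tau (2 * x) * thf tau (th + z + x + g) * thf tau (th - of_nat L * g))
     / (thf tau (2 * x + g) * thf tau (th + z + x) * thf tau (th - (of_nat L - 1) * g))
     * (\<Prod>j\<in>{1..L}. thf tau (x - mu j) * thf tau (x + mu j))"

definition LamAbar :: "complex \<Rightarrow> complex \<Rightarrow> complex \<Rightarrow> complex \<Rightarrow> nat \<Rightarrow> (nat \<Rightarrow> complex)
    \<Rightarrow> complex \<Rightarrow> complex" where
  "LamAbar tau g th z L mu x =
     thf tau (z - x)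
     * (thf tau g * thf tau (th + (of_nat L - 1) * g - 2 * x))
     / (thf tau (2 * x + g) * thf tau (th + (of_nat L - 1) * g))
     * (\<Prod>j\<in>{1..L}. thf tau (x - mu j + g) * thf tau (x + mu j + g))
   + thf tau (z + x + g)
     * (thf tau (2 * x) * thf tau (th + z - x - g) * thf tau (th + of_nat L * g))
     / (thf tau (2 * x + g) * thf tau (th + z + x) * thf tau (th + (of_nat L - 1) * g))
     * (\<Prod>j\<in>{1..L}. thf tau (x - mu j) * thf tau (x + mu j))"

definition M0 :: "complex \<Rightarrow> complex \<Rightarrow> complex \<Rightarrow> complex \<Rightarrow> nat \<Rightarrow> (nat \<Rightarrow> complex)
    \<Rightarrow> complex \<Rightarrow> (nat \<Rightarrow> complex) \<Rightarrow> complex" where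
  "M0 tau g th z L mu l0 lam =
     LamAbar tau g th z L mu l0
     - LamA tau g th z L mu l0
       * (\<Prod>j\<in>{1..L}. (thf tau (lam j - l0 + g) * thf tau (lam j + l0))
                        / (thf tau (lam j - l0) * thf tau (lam j + l0 + g)))"

definition Mi :: "complex \<Rightarrow> complex \<Rightarrow> complex \<Rightarrow> complex \<Rightarrow> nat \<Rightarrow> (nat \<Rightarrow> complex)
    \<Rightarrow> nat \<Rightarrow> complex \<Rightarrow> (nat \<Rightarrow> complex) \<Rightarrow> complex" where
  "Mi tau g th z L mu i l0 lam =
     (thf tau (2 * lam i) * thf tau g * thf tau (th + (of_nat L - 1) * g + lam i - l0))
     / (thf tau (2 * lam i + g) * thf tau (lam i - l0) * thf tau (th + (of_nat L - 1) * g))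
     * LamA tau g th z L mu (lam i)
     * (\<Prod>j\<in>{1..L} - {i}. (thf tau (lam j - lam i + g) * thf tau (lam j + lam i))
                             / (thf tau (lam j - lam i) * thf tau (lam j + lam i + g)))
   + (thf tau g * thf tau (th + (of_nat L - 2) * g - lam i - l0) * thf tau (th - (of_nat L - 1) * g))
     / (thf tau (lam i + l0 + g) * thf tau (th + (of_nat L - 1) * g) * thf tau (th - of_nat L * g))
     * LamD tau g th z L mu (lam i)
     * (\<Prod>j\<in>{1..L} - {i}. (thf tau (lam i - lam j + g) * thf tau (lam i + lam j + 2 * g))
                             / (thf tau (lam i - lam j) * thf tau (lam i + lam j + g)))"

text \<open>Genericity: every denominator occurring in M_0 at the given point is nonzero
  (so that M_0 is regular there and the identities are meaningful pointwise).\<close>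
definition M0_regular :: "complex \<Rightarrow> complex \<Rightarrow> complex \<Rightarrow> complex \<Rightarrow> nat
    \<Rightarrow> complex \<Rightarrow> (nat \<Rightarrow> complex) \<Rightarrow> bool" where
  "M0_regular tau g th z L l0 lam \<longleftrightarrow>
     thf tau (th + z + l0) \<noteq> 0 \<and> thf tau (2 * l0 + g) \<noteq> 0
     \<and> thf tau (th + (of_nat L - 1) * g) \<noteq> 0
     \<and> (\<forall>j\<in>{1..L}. thf tau (lam j - l0) \<noteq> 0 \<and> thf tau (lam j + l0 + g) \<noteq> 0)"

definition Mi_regular :: "complex \<Rightarrow> complex \<Rightarrow> complex \<Rightarrow> complex \<Rightarrow> nat
    \<Rightarrow> nat \<Rightarrow> complex \<Rightarrow> (nat \<Rightarrow> complex) \<Rightarrow> bool" where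
  "Mi_regular tau g th z L i l0 lam \<longleftrightarrow>
     thf tau (2 * lam i + g) \<noteq> 0 \<and> thf tau (lam i - l0) \<noteq> 0
     \<and> thf tau (th + (of_nat L - 1) * g) \<noteq> 0 \<and> thf tau (th + z + lam i) \<noteq> 0
     \<and> thf tau (lam i + l0 + g) \<noteq> 0 \<and> thf tau (th - of_nat L * g) \<noteq> 0
     \<and> thf tau (th - (of_nat L - 1) * g) \<noteq> 0
     \<and> (\<forall>j\<in>{1..L} - {i}. thf tau (lam j - lam i) \<noteq> 0 \<and> thf tau (lam j + lam i + g) \<noteq> 0
                          \<and> thf tau (lam i - lam j) \<noteq> 0 \<and> thf tau (lam i + lam j + g) \<noteq> 0)"

end

theory Submission
  imports Defs
begin

lemma norm_sinh_le: "norm (sinh (w::complex)) \<le> exp (norm w)"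
proof -
  have "norm (sinh w) = norm (exp w - exp (-w)) / 2" by (simp add: sinh_field_def)
  also have "\<dots> \<le> (norm (exp w) + norm (exp (-w))) / 2"
    by (intro divide_right_mono norm_triangle_ineq4) auto
  also have "\<dots> = (exp (Re w) + exp (- Re w)) / 2" by simp
  also have "\<dots> \<le> exp (norm w)"
  proof -
    have "exp (Re w) \<le> exp (norm w)" using abs_Re_le_cmod[of w] by simp
    moreover have "exp (- Re w) \<le> exp (norm w)" using abs_Re_le_cmod[of w] by simp
    ultimately have "exp (Re w) + exp (- Re w) \<le> 2 * exp (norm w)" by linarith
    thus ?thesis by simp
  qed
  finally show ?thesis .
qed

lemma thf_summable:
  assumes "Im tau > 0"
  shows "summable (\<lambda>n. (-1)^n * exp (\<i> * of_nat (n * (n + 1)) * of_real pi * tau)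
                      * sinh (of_nat (2 * n + 1) * x))"
proof (rule summable_comparison_test)
  define a where "a = pi * Im tau"
  define b where "b = cmod x"
  have a: "a > 0" using assms by (simp add: a_def)
  have b: "b \<ge> 0" by (simp add: b_def)
  define g where "g n = exp (- real (n * (n + 1)) * a + real (2 * n + 1) * b)" for n
  show "\<exists>N. \<forall>n\<ge>N. norm ((-1)^n * exp (\<i> * of_nat (n * (n + 1)) * of_real pi * tau)
                      * sinh (of_nat (2 * n + 1) * x)) \<le> g n"
  proof (intro exI allI impI)
    fix n :: nat
    have "norm ((-1)^n * exp (\<i> * of_nat (n * (n + 1)) * of_real pi * tau)
                      * sinh (of_nat (2 * n + 1) * x))
        = exp (- real (n * (n + 1)) * a) * norm (sinh (of_nat (2 * n + 1) * x))"
      by (simp add: norm_mult norm_power a_def algebra_simps)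
    also have "\<dots> \<le> exp (- real (n * (n + 1)) * a) * exp (real (2 * n + 1) * b)"
    proof (rule mult_left_mono)
      have "norm (of_nat (2 * n + 1) * x :: complex) = real (2*n+1) * b"
        by (simp only: norm_mult norm_of_nat b_def)
      thus "norm (sinh (of_nat (2 * n + 1) * x)) \<le> exp (real (2 * n + 1) * b)"
        using norm_sinh_le[of "of_nat (2 * n + 1) * x"] by simp
    qed simp
    also have "\<dots> = g n" by (simp add: g_def exp_add)
    finally show "norm ((-1)^n * exp (\<i> * of_nat (n * (n + 1)) * of_real pi * tau)
                      * sinh (of_nat (2 * n + 1) * x)) \<le> g n" .
  qed
  define N where "N = nat (ceiling ((b + 1) / a))"
  show "summable g"
  proof (rule summable_ratio_test[of "1/2" N])
    fix n assume n: "N \<le> n"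
    have "(b + 1) / a \<le> real N" unfolding N_def by linarith
    hence "b + 1 \<le> real N * a" using a by (simp add: field_simps)
    also have "\<dots> \<le> real (n+1) * a" using n a by (intro mult_right_mono) auto
    finally have le: "- 2 * real (n + 1) * a + 2 * b \<le> -2" by linarith
    have gs: "g (Suc n) = g n * exp (- 2 * real (n + 1) * a + 2 * b)"
      unfolding g_def exp_add[symmetric] by (rule arg_cong[where f=exp]) (simp add: algebra_simps)
    have "exp (- 2 * real (n + 1) * a + 2 * b) \<le> exp (-2)" using le by simp
    also have "exp (-2::real) \<le> 1/2"
    proof -
      have "2 \<le> exp (2::real)" using exp_ge_add_one_self[of 2] by simp
      thus ?thesis by (simp add: exp_minus field_simps)
    qed
    finally have "exp (- 2 * real (n + 1) * a + 2 * b) \<le> 1/2" .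
    have pos: "\<And>m. g m > 0" by (simp add: g_def)
    have *: "g n * exp (- 2 * real (n + 1) * a + 2 * b) \<le> g n * (1/2)"
      by (rule mult_left_mono) (use \<open>exp (- 2 * real (n + 1) * a + 2 * b) \<le> 1/2\<close> pos[of n] in auto)
    have "norm (g (Suc n)) = g n * exp (- 2 * real (n + 1) * a + 2 * b)"
      using pos[of "Suc n"] gs by simp
    moreover have "norm (g n) = g n" using pos[of n] by simp
    ultimately show "norm (g (Suc n)) \<le> 1/2 * norm (g n)" using * by simp
  qed simp
qed

lemma thf_odd:
  assumes "Im tau > 0"
  shows "thf tau (-x) = - thf tau x"
proof -
  have "thf tau (-x) = (\<Sum>n. - ((-1)^n * exp (\<i> * of_nat (n * (n + 1)) * of_real pi * tau)
                      * sinh (of_nat (2 * n + 1) * x)))"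
    unfolding thf_def by simp
  also have "\<dots> = - thf tau x"
    unfolding thf_def by (rule suminf_minus[OF thf_summable[OF assms]])
  finally show ?thesis .
qed

lemma thf_neg: "Im tau > 0 \<Longrightarrow> a = - b \<Longrightarrow> thf tau a = - thf tau b"
  using thf_odd by simp

lemma prod_perm_comp: "\<sigma> permutes S \<Longrightarrow> (\<Prod>j\<in>S. P (lam (\<sigma> j))) = (\<Prod>j\<in>S. P ((lam::nat\<Rightarrow>complex) j))"
  using prod.permute[of \<sigma> S "\<lambda>j. P (lam j)"] by (simp add: comp_def)

lemma part1:
  assumes "\<sigma> permutes {1..L}"
  shows "M0 tau g th z L mu l0 (lam \<circ> \<sigma>) = M0 tau g th z L mu l0 lam"
  unfolding M0_def comp_def
  using prod_perm_comp[OF assms, of "\<lambda>x. (thf tau (x - l0 + g) * thf tau (x + l0))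
                        / (thf tau (x - l0) * thf tau (x + l0 + g))" lam] by simp

lemma part2:
  assumes tau: "Im tau > 0"
  shows "M0 tau g th z L mu l0 (lam(j := - lam j - g)) = M0 tau g th z L mu l0 lam"
proof -
  have "(\<Prod>k\<in>{1..L}. (thf tau ((lam(j := - lam j - g)) k - l0 + g) * thf tau ((lam(j := - lam j - g)) k + l0))
                        / (thf tau ((lam(j := - lam j - g)) k - l0) * thf tau ((lam(j := - lam j - g)) k + l0 + g)))
      = (\<Prod>k\<in>{1..L}. (thf tau (lam k - l0 + g) * thf tau (lam k + l0))
                        / (thf tau (lam k - l0) * thf tau (lam k + l0 + g)))"
  proof (rule prod.cong[OF refl])
    fix k
    show "(thf tau ((lam(j := - lam j - g)) k - l0 + g) * thf tau ((lam(j := - lam j - g)) k + l0))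
                        / (thf tau ((lam(j := - lam j - g)) k - l0) * thf tau ((lam(j := - lam j - g)) k + l0 + g))
        = (thf tau (lam k - l0 + g) * thf tau (lam k + l0))
                        / (thf tau (lam k - l0) * thf tau (lam k + l0 + g))"
    proof (cases "k = j")
      case True
      have e1: "thf tau (- lam j - g - l0 + g) = - thf tau (lam j + l0)" by (rule thf_neg[OF tau]) simp
      have e2: "thf tau (- lam j - g + l0) = - thf tau (lam j - l0 + g)" by (rule thf_neg[OF tau]) simp
      have e3: "thf tau (- lam j - g - l0) = - thf tau (lam j + l0 + g)" by (rule thf_neg[OF tau]) simp
      have e4: "thf tau (- lam j - g + l0 + g) = - thf tau (lam j - l0)" by (rule thf_neg[OF tau]) simp
      show ?thesis using True apply (simp only: fun_upd_same e1 e2 e3 e4) by (simp add: mult.commute)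
    qed simp
  qed
  thus ?thesis unfolding M0_def by simp
qed

lemma part3:
  assumes "\<sigma> permutes ({1..L} - {i})"
  shows "Mi tau g th z L mu i l0 (lam \<circ> \<sigma>) = Mi tau g th z L mu i l0 lam"
proof -
  have si: "\<sigma> i = i" using assms by (simp add: permutes_not_in)
  show ?thesis
    unfolding Mi_def comp_def si
    using prod_perm_comp[OF assms, of "\<lambda>x. (thf tau (x - lam i + g) * thf tau (x + lam i))
                             / (thf tau (x - lam i) * thf tau (x + lam i + g))" lam]
      prod_perm_comp[OF assms, of "\<lambda>x. (thf tau (lam i - x + g) * thf tau (lam i + x + 2 * g))
                             / (thf tau (lam i - x) * thf tau (lam i + x + g))" lam]
    by simp
qed

lemma part4:
  assumes tau: "Im tau > 0" and ji: "j \<noteq> i"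
  shows "Mi tau g th z L mu i l0 (lam(j := - lam j - g)) = Mi tau g th z L mu i l0 lam"
proof -
  let ?l = "lam(j := - lam j - g)"
  have p1: "(\<Prod>k\<in>{1..L} - {i}. (thf tau (?l k - lam i + g) * thf tau (?l k + lam i))
                             / (thf tau (?l k - lam i) * thf tau (?l k + lam i + g)))
     = (\<Prod>k\<in>{1..L} - {i}. (thf tau (lam k - lam i + g) * thf tau (lam k + lam i))
                             / (thf tau (lam k - lam i) * thf tau (lam k + lam i + g)))"
  proof (rule prod.cong[OF refl])
    fix k
    show "(thf tau (?l k - lam i + g) * thf tau (?l k + lam i))
                             / (thf tau (?l k - lam i) * thf tau (?l k + lam i + g))
       = (thf tau (lam k - lam i + g) * thf tau (lam k + lam i))
                             / (thf tau (lam k - lam i) * thf tau (lam k + lam i + g))"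
    proof (cases "k = j")
      case True
      have e1: "thf tau (- lam j - g - lam i + g) = - thf tau (lam j + lam i)" by (rule thf_neg[OF tau]) simp
      have e2: "thf tau (- lam j - g + lam i) = - thf tau (lam j - lam i + g)" by (rule thf_neg[OF tau]) simp
      have e3: "thf tau (- lam j - g - lam i) = - thf tau (lam j + lam i + g)" by (rule thf_neg[OF tau]) simp
      have e4: "thf tau (- lam j - g + lam i + g) = - thf tau (lam j - lam i)" by (rule thf_neg[OF tau]) simp
      show ?thesis using True apply (simp only: fun_upd_same e1 e2 e3 e4) by (simp add: mult.commute)
    qed simp
  qed
  have p2: "(\<Prod>k\<in>{1..L} - {i}. (thf tau (lam i - ?l k + g) * thf tau (lam i + ?l k + 2 * g))
                             / (thf tau (lam i - ?l k) * thf tau (lam i + ?l k + g)))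
     = (\<Prod>k\<in>{1..L} - {i}. (thf tau (lam i - lam k + g) * thf tau (lam i + lam k + 2 * g))
                             / (thf tau (lam i - lam k) * thf tau (lam i + lam k + g)))"
  proof (rule prod.cong[OF refl])
    fix k
    show "(thf tau (lam i - ?l k + g) * thf tau (lam i + ?l k + 2 * g))
                             / (thf tau (lam i - ?l k) * thf tau (lam i + ?l k + g))
       = (thf tau (lam i - lam k + g) * thf tau (lam i + lam k + 2 * g))
                             / (thf tau (lam i - lam k) * thf tau (lam i + lam k + g))"
    proof (cases "k = j")
      case True
      have e1: "lam i - (- lam j - g) + g = lam i + lam j + 2 * g" by simp
      have e2: "lam i + (- lam j - g) + 2 * g = lam i - lam j + g" by simp
      have e3: "lam i - (- lam j - g) = lam i + lam j + g" by simp
      have e4: "lam i + (- lam j - g) + g = lam i - lam j" by simp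
      show ?thesis using True apply (simp only: fun_upd_same e1 e2) apply (simp only: e3 e4) by (simp only: mult.commute)
    qed simp
  qed
  have li: "?l i = lam i" using ji by simp
  show ?thesis unfolding Mi_def li p1 p2 ..
qed


lemma part5:
  assumes "i \<in> {1..L}" "j \<in> {1..L}"
  shows "Mi tau g th z L mu i l0 (lam(i := lam j, j := lam i)) = Mi tau g th z L mu j l0 lam"
proof (cases "i = j")
  case True thus ?thesis by simp
next
  case False
  let ?l = "lam(i := lam j, j := lam i)"
  let ?s = "\<lambda>k. if k = i then j else if k = j then i else k"
  have sw: "\<And>P::complex\<Rightarrow>complex. (\<Prod>k\<in>{1..L} - {i}. P (?l k)) = (\<Prod>k\<in>{1..L} - {j}. P (lam k))"
  proof -
    fix P :: "complex \<Rightarrow> complex"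
    show "(\<Prod>k\<in>{1..L} - {i}. P (?l k)) = (\<Prod>k\<in>{1..L} - {j}. P (lam k))"
      by (rule prod.reindex_bij_witness[where i = ?s and j = ?s]) (use assms False in auto)
  qed
  have li: "?l i = lam j" using False by simp
  show ?thesis
    unfolding Mi_def li
    using sw[of "\<lambda>x. (thf tau (x - lam j + g) * thf tau (x + lam j))
                             / (thf tau (x - lam j) * thf tau (x + lam j + g))"]
      sw[of "\<lambda>x. (thf tau (lam j - x + g) * thf tau (lam j + x + 2 * g))
                             / (thf tau (lam j - x) * thf tau (lam j + x + g))"]
    by simp
qed

lemma thf_pos: "a = b \<Longrightarrow> thf tau a = thf tau b" by simp

lemma fac1:
  assumes tau: "Im tau > 0"
  shows "(thf tau (x - (- y - g) + g) * thf tau (x + (- y - g)))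
           / (thf tau (x - (- y - g)) * thf tau (x + (- y - g) + g))
       = (thf tau (y - x + g) * thf tau (y + x + 2 * g)) / (thf tau (y - x) * thf tau (y + x + g))"
proof -
  have e1: "thf tau (x - (- y - g) + g) = thf tau (y + x + 2 * g)" by (rule thf_pos) simp
  have e2: "thf tau (x + (- y - g) + g) = - thf tau (y - x)" by (rule thf_neg[OF tau]) simp
  have e3: "thf tau (x - (- y - g)) = thf tau (y + x + g)" by (rule thf_pos) simp
  have e4: "thf tau (x + (- y - g)) = - thf tau (y - x + g)" by (rule thf_neg[OF tau]) simp
  show ?thesis unfolding e1 e2 unfolding e3 e4 by (simp add: mult.commute)
qed

lemma fac2:
  assumes tau: "Im tau > 0"
  shows "(thf tau ((- y - g) - x + g) * thf tau ((- y - g) + x + 2 * g))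
           / (thf tau ((- y - g) - x) * thf tau ((- y - g) + x + g))
       = (thf tau (x - y + g) * thf tau (x + y)) / (thf tau (x - y) * thf tau (x + y + g))"
proof -
  have e1: "thf tau ((- y - g) - x + g) = - thf tau (x + y)" by (rule thf_neg[OF tau]) simp
  have e2: "thf tau ((- y - g) + x + 2 * g) = thf tau (x - y + g)" by (rule thf_pos) simp
  have e3: "thf tau ((- y - g) - x) = - thf tau (x + y + g)" by (rule thf_neg[OF tau]) simp
  have e4: "thf tau ((- y - g) + x + g) = thf tau (x - y)" by (rule thf_pos) simp
  show ?thesis unfolding e1 e2 unfolding e3 e4 by (simp add: mult.commute)
qed

lemma fac3:
  assumes tau: "Im tau > 0"
  shows "thf tau ((- y - g) - m + g) * thf tau ((- y - g) + m + g) = thf tau (y - m) * thf tau (y + m)"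
proof -
  have e1: "thf tau ((- y - g) - m + g) = - thf tau (y + m)" by (rule thf_neg[OF tau]) simp
  have e2: "thf tau ((- y - g) + m + g) = - thf tau (y - m)" by (rule thf_neg[OF tau]) simp
  show ?thesis unfolding e1 e2 by (simp add: mult.commute)
qed

lemma fac4:
  assumes tau: "Im tau > 0"
  shows "thf tau ((- y - g) - m) * thf tau ((- y - g) + m) = thf tau (y - m + g) * thf tau (y + m + g)"
proof -
  have e1: "thf tau ((- y - g) - m) = - thf tau (y + m + g)" by (rule thf_neg[OF tau]) simp
  have e2: "thf tau ((- y - g) + m) = - thf tau (y - m + g)" by (rule thf_neg[OF tau]) simp
  show ?thesis unfolding e1 e2 by (simp add: mult.commute)
qed

lemma part6:
  assumes tau: "Im tau > 0" and i: "i \<in> {1..L}"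
    and reg: "Mi_regular tau g th z L i l0 lam"
    and A: "thf tau (2 * lam i) \<noteq> 0" and W: "thf tau (th + z - lam i - g) \<noteq> 0"
  shows "Mi tau g th z L mu i l0 (lam(i := - lam i - g))
          = - (thf tau (2 * lam i + 2 * g) * thf tau (th + z + lam i))
              / (thf tau (2 * lam i) * thf tau (th + z - lam i - g))
            * Mi tau g th z L mu i l0 lam"
proof -
  let ?l = "lam(i := - lam i - g)"
  have P1: "(\<Prod>k\<in>{1..L} - {i}. (thf tau (?l k - (- lam i - g) + g) * thf tau (?l k + (- lam i - g)))
                             / (thf tau (?l k - (- lam i - g)) * thf tau (?l k + (- lam i - g) + g)))
     = (\<Prod>k\<in>{1..L} - {i}. (thf tau (lam i - lam k + g) * thf tau (lam i + lam k + 2 * g))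
                             / (thf tau (lam i - lam k) * thf tau (lam i + lam k + g)))"
  proof (rule prod.cong[OF refl])
    fix k assume "k \<in> {1..L} - {i}"
    hence "?l k = lam k" by simp
    thus "(thf tau (?l k - (- lam i - g) + g) * thf tau (?l k + (- lam i - g)))
                             / (thf tau (?l k - (- lam i - g)) * thf tau (?l k + (- lam i - g) + g))
       = (thf tau (lam i - lam k + g) * thf tau (lam i + lam k + 2 * g))
                             / (thf tau (lam i - lam k) * thf tau (lam i + lam k + g))"
      by (simp only: fac1[OF tau])
  qed
  have P2: "(\<Prod>k\<in>{1..L} - {i}. (thf tau ((- lam i - g) - ?l k + g) * thf tau ((- lam i - g) + ?l k + 2 * g))
                             / (thf tau ((- lam i - g) - ?l k) * thf tau ((- lam i - g) + ?l k + g)))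
     = (\<Prod>k\<in>{1..L} - {i}. (thf tau (lam k - lam i + g) * thf tau (lam k + lam i))
                             / (thf tau (lam k - lam i) * thf tau (lam k + lam i + g)))"
  proof (rule prod.cong[OF refl])
    fix k assume "k \<in> {1..L} - {i}"
    hence "?l k = lam k" by simp
    thus "(thf tau ((- lam i - g) - ?l k + g) * thf tau ((- lam i - g) + ?l k + 2 * g))
                             / (thf tau ((- lam i - g) - ?l k) * thf tau ((- lam i - g) + ?l k + g))
       = (thf tau (lam k - lam i + g) * thf tau (lam k + lam i))
                             / (thf tau (lam k - lam i) * thf tau (lam k + lam i + g))"
      by (simp only: fac2[OF tau])
  qed
  have PA: "(\<Prod>j\<in>{1..L}. thf tau ((- lam i - g) - mu j + g) * thf tau ((- lam i - g) + mu j + g))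
      = (\<Prod>j\<in>{1..L}. thf tau (lam i - mu j) * thf tau (lam i + mu j))"
    by (simp only: fac3[OF tau])
  have PD: "(\<Prod>j\<in>{1..L}. thf tau ((- lam i - g) - mu j) * thf tau ((- lam i - g) + mu j))
      = (\<Prod>j\<in>{1..L}. thf tau (lam i - mu j + g) * thf tau (lam i + mu j + g))"
    by (simp only: fac4[OF tau])
  have a1: "thf tau (2 * (- lam i - g)) = - thf tau (2 * lam i + 2 * g)" by (rule thf_neg[OF tau]) simp
  have a2: "thf tau (th + (of_nat L - 1) * g + (- lam i - g) - l0) = thf tau (th + (of_nat L - 2) * g - lam i - l0)"
    by (rule thf_pos) (simp add: algebra_simps)
  have a3: "thf tau (2 * (- lam i - g) + g) = - thf tau (2 * lam i + g)" by (rule thf_neg[OF tau]) simp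
  have a4: "thf tau ((- lam i - g) - l0) = - thf tau (lam i + l0 + g)" by (rule thf_neg[OF tau]) simp
  have a5: "thf tau (z + (- lam i - g)) = thf tau (z - lam i - g)" by (rule thf_pos) simp
  have a6: "thf tau (th + z - (- lam i - g)) = thf tau (th + z + lam i + g)" by (rule thf_pos) simp
  have a7: "thf tau (th + z + (- lam i - g)) = thf tau (th + z - lam i - g)" by (rule thf_pos) simp
  have a8: "thf tau (th + (of_nat L - 2) * g - (- lam i - g) - l0) = thf tau (th + (of_nat L - 1) * g + lam i - l0)"
    by (rule thf_pos) (simp add: algebra_simps)
  have a9: "thf tau ((- lam i - g) + l0 + g) = - thf tau (lam i - l0)" by (rule thf_neg[OF tau]) simp
  have a10: "thf tau (z - (- lam i - g) - g) = thf tau (z + lam i)" by (rule thf_pos) simp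
  have a11: "thf tau (th + z + (- lam i - g) + g) = thf tau (th + z - lam i)" by (rule thf_pos) simp
  have nz: "thf tau (2 * lam i + g) \<noteq> 0" "thf tau (lam i - l0) \<noteq> 0"
     "thf tau (th + (of_nat L - 1) * g) \<noteq> 0" "thf tau (th + z + lam i) \<noteq> 0"
     "thf tau (lam i + l0 + g) \<noteq> 0" "thf tau (th - of_nat L * g) \<noteq> 0"
     "thf tau (th - (of_nat L - 1) * g) \<noteq> 0"
    using reg unfolding Mi_regular_def by auto
  show ?thesis
    unfolding Mi_def LamA_def LamD_def fun_upd_same
    unfolding P1 P2 PA PD
    unfolding a3 a11 a2 a4 a5 a6 a8 a9 a10
    unfolding a1 a7
    using nz A W by (simp add: field_simps)
qed

theorem lemma3p4:
  fixes tau g th z l0 :: complex and L :: nat and mu lam :: "nat \<Rightarrow> complex"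
  assumes "Im tau > 0" and "L \<ge> 1"
  shows
    "(\<forall>\<sigma>. \<sigma> permutes {1..L} \<longrightarrow>
        M0_regular tau g th z L l0 lam \<longrightarrow> M0_regular tau g th z L l0 (lam \<circ> \<sigma>) \<longrightarrow>
        M0 tau g th z L mu l0 (lam \<circ> \<sigma>) = M0 tau g th z L mu l0 lam)
   \<and> (\<forall>j\<in>{1..L}.
        M0_regular tau g th z L l0 lam \<longrightarrow> M0_regular tau g th z L l0 (lam(j := - lam j - g)) \<longrightarrow>
        M0 tau g th z L mu l0 (lam(j := - lam j - g)) = M0 tau g th z L mu l0 lam)
   \<and> (\<forall>i\<in>{1..L}. \<forall>\<sigma>. \<sigma> permutes ({1..L} - {i}) \<longrightarrow>
        Mi_regular tau g th z L i l0 lam \<longrightarrow> Mi_regular tau g th z L i l0 (lam \<circ> \<sigma>) \<longrightarrow>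
        Mi tau g th z L mu i l0 (lam \<circ> \<sigma>) = Mi tau g th z L mu i l0 lam)
   \<and> (\<forall>i\<in>{1..L}. \<forall>j\<in>{1..L} - {i}.
        Mi_regular tau g th z L i l0 lam \<longrightarrow> Mi_regular tau g th z L i l0 (lam(j := - lam j - g)) \<longrightarrow>
        Mi tau g th z L mu i l0 (lam(j := - lam j - g)) = Mi tau g th z L mu i l0 lam)
   \<and> (\<forall>i\<in>{1..L}. \<forall>j\<in>{1..L}.
        Mi_regular tau g th z L i l0 (lam(i := lam j, j := lam i)) \<longrightarrow> Mi_regular tau g th z L j l0 lam \<longrightarrow>
        Mi tau g th z L mu i l0 (lam(i := lam j, j := lam i)) = Mi tau g th z L mu j l0 lam)
   \<and> (\<forall>i\<in>{1..L}.
        Mi_regular tau g th z L i l0 lam \<longrightarrow> Mi_regular tau g th z L i l0 (lam(i := - lam i - g)) \<longrightarrow>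
        thf tau (2 * lam i) \<noteq> 0 \<longrightarrow> thf tau (th + z - lam i - g) \<noteq> 0 \<longrightarrow>
        Mi tau g th z L mu i l0 (lam(i := - lam i - g))
          = - (thf tau (2 * lam i + 2 * g) * thf tau (th + z + lam i))
              / (thf tau (2 * lam i) * thf tau (th + z - lam i - g))
            * Mi tau g th z L mu i l0 lam)"
proof (intro conjI ballI allI impI)
  have tau: "Im tau > 0" using assms(1) .
  show "M0 tau g th z L mu l0 (lam \<circ> \<sigma>) = M0 tau g th z L mu l0 lam" if "\<sigma> permutes {1..L}" for \<sigma>
    using part1[OF that] .
  show "M0 tau g th z L mu l0 (lam(j := - lam j - g)) = M0 tau g th z L mu l0 lam" for j
    using part2[OF tau] .
  show "Mi tau g th z L mu i l0 (lam \<circ> \<sigma>) = Mi tau g th z L mu i l0 lam"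
    if "\<sigma> permutes {1..L} - {i}" for i \<sigma>
    using part3[OF that] .
  show "Mi tau g th z L mu i l0 (lam(j := - lam j - g)) = Mi tau g th z L mu i l0 lam"
    if "j \<in> {1..L} - {i}" for i j
    using part4[OF tau] that by simp
  show "Mi tau g th z L mu i l0 (lam(i := lam j, j := lam i)) = Mi tau g th z L mu j l0 lam"
    if "i \<in> {1..L}" "j \<in> {1..L}" for i j
    using part5[OF that] .
  show "Mi tau g th z L mu i l0 (lam(i := - lam i - g))
          = - (thf tau (2 * lam i + 2 * g) * thf tau (th + z + lam i))
              / (thf tau (2 * lam i) * thf tau (th + z - lam i - g))
            * Mi tau g th z L mu i l0 lam"
    if "i \<in> {1..L}" "Mi_regular tau g th z L i l0 lam" "thf tau (2 * lam i) \<noteq> 0"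
       "thf tau (th + z - lam i - g) \<noteq> 0" for i
    using part6[OF tau that] .
qed

end
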